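(* For every $n\ge 1$, $c_{n+1}\le (1-2^{-n})c_n+2^{-n}$.
   Context: For $n\ge1$, $c_n$ denotes the probability that $G\sim G(n,1/2)$ is not even-degenerate. A graph on $n$ vertices is even-degenerate if there is an ordering $v_1,\dots,v_n$ of its vertices such that for each $1\le i\le n-2$, $v_i$ has an even number of neighbours in $\{v_{i+1},\dots,v_n\}$. *)

theory Defs
  imports Main "HOL-Probability.Probability"
begin

definition all_edges :: "nat \<Rightarrow> nat set set" where
  "all_edges n = {e. \<exists>x y. x < n \<and> y < n \<and> x \<noteq> y \<and> e = {x, y}}"

text \<open>Even-degenerate: there is an ordering v_1..v_n of the vertices (a list vs,
  0-indexed) such that for each 1 \<le> i \<le> n-2 (i.e. 0-indexed i with i+2<n),
  v_i has an even number of neighbours among the later vertices.\<close>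

definition even_degenerate :: "nat \<Rightarrow> nat set set \<Rightarrow> bool" where
  "even_degenerate n E \<longleftrightarrow>
     (\<exists>vs. distinct vs \<and> set vs = {0..<n} \<and>
        (\<forall>i. i + 2 < n \<longrightarrow>
           even (card {j. i < j \<and> j < n \<and> {vs ! i, vs ! j} \<in> E})))"

definition Gnp_half :: "nat \<Rightarrow> nat set set pmf" where
  "Gnp_half n = pmf_of_set (Pow (all_edges n))"

definition c :: "nat \<Rightarrow> real" where
  "c n = measure_pmf.prob (Gnp_half n) {E. \<not> even_degenerate n E}"

end

theory Submission
  imports Defs
begin

lemma card_parity_subsets:
  assumes "finite A" "A \<noteq> {}"
  shows "card {S. S \<subseteq> A \<and> even (p + card S)} = 2 ^ (card A - 1)"
proof -
  have eo: "card {T. T \<subseteq> A \<and> {} \<subseteq> T \<and> even(card T)} = card {T. T \<subseteq> A \<and> {} \<subseteq> T \<and> odd(card T)}"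
    using card_subsupersets_even_odd[of A "{}"] assms by blast
  have un: "Pow A = {T. T \<subseteq> A \<and> even(card T)} \<union> {T. T \<subseteq> A \<and> odd(card T)}" by auto
  have "card (Pow A) = card {T. T \<subseteq> A \<and> even(card T)} + card {T. T \<subseteq> A \<and> odd(card T)}"
    unfolding un using assms(1) by (intro card_Un_disjoint) auto
  then have "2 ^ card A = 2 * card {T. T \<subseteq> A \<and> even(card T)}"
       "2 ^ card A = 2 * card {T. T \<subseteq> A \<and> odd(card T)}"
    using eo assms(1) by (auto simp: card_Pow)
  moreover have "card A > 0" using assms by (simp add: card_gt_0_iff)
  ultimately have "card {T. T \<subseteq> A \<and> even(card T)} = 2 ^ (card A - 1)"
       "card {T. T \<subseteq> A \<and> odd(card T)} = 2 ^ (card A - 1)"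
    by (metis Suc_diff_1 nonzero_mult_div_cancel_left power_Suc zero_neq_numeral)+
  then show ?thesis
    by (cases "even p") auto
qed

lemma sum_pow2: "(\<Sum>k<n. (2::nat) ^ (n - k - 1)) = 2 ^ n - 1"
proof (induction n)
  case 0 then show ?case by simp
next
  case (Suc n)
  have "(\<Sum>k<Suc n. (2::nat) ^ (Suc n - k - 1)) = (\<Sum>k<n. 2 ^ (Suc n - k - 1)) + 1"
    by simp
  also have "(\<Sum>k<n. (2::nat) ^ (Suc n - k - 1)) = (\<Sum>k<n. 2 * 2 ^ (n - k - 1))"
    by (intro sum.cong) (auto simp: Suc_diff_Suc simp flip: power_Suc)
  also have "\<dots> = 2 * (\<Sum>k<n. (2::nat) ^ (n - k - 1))" by (simp add: sum_distrib_left)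
  also have "\<dots> = 2 * (2 ^ n - 1)" using Suc.IH by simp
  finally have "(\<Sum>k<Suc n. (2::nat) ^ (Suc n - k - 1)) = 2 * (2 ^ n - 1) + 1" .
  moreover have "(1::nat) \<le> 2 ^ n" by simp
  ultimately show ?case by (simp only: power_Suc)
qed

lemma all_edges_Suc:
  "all_edges (Suc n) = all_edges n \<union> (\<lambda>x. {x, n}) ` {0..<n}"
  unfolding all_edges_def by (auto simp: less_Suc_eq) blast+

lemma finite_all_edges: "finite (all_edges n)"
proof -
  have "all_edges n \<subseteq> Pow {0..<n}" unfolding all_edges_def by auto
  then show ?thesis by (rule finite_subset) auto
qed

lemma card_all_edges_Suc: "card (all_edges (Suc n)) = card (all_edges n) + n"
proof -
  have d: "all_edges n \<inter> (\<lambda>x. {x, n}) ` {0..<n} = {}"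
    unfolding all_edges_def by (auto simp: doubleton_eq_iff)
  have i: "inj_on (\<lambda>x. {x, n}) {0..<n}"
    by (auto simp: inj_on_def doubleton_eq_iff)
  show ?thesis
    unfolding all_edges_Suc
    by (subst card_Un_disjoint) (use d i finite_all_edges in \<open>auto simp: card_image\<close>)
qed

definition sh :: "nat \<Rightarrow> nat \<Rightarrow> nat" where
  "sh k w = (if w < k then w else Suc w)"

definition nb :: "nat set set \<Rightarrow> nat \<Rightarrow> nat set" where
  "nb H w = {x. {w, x} \<in> H}"

definition TT :: "nat set set \<Rightarrow> nat \<Rightarrow> nat set" where
  "TT H k = {w. w < k \<and> even (card (nb H w))}"

definition constr :: "nat set set \<Rightarrow> nat \<Rightarrow> nat set \<Rightarrow> nat set set" where
  "constr H k S = (image (sh k)) ` H \<union> (\<lambda>w. {k, w}) ` (TT H k \<union> S)"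

lemma inj_sh: "inj (sh k)"
  by (auto simp: inj_def sh_def split: if_splits)

lemma sh_neq: "sh k w \<noteq> k"
  by (auto simp: sh_def)

lemma k_notin_sh_image: "k \<notin> sh k ` e"
  by (metis imageE sh_neq)

lemma sh_image_in_constr: "(sh k ` e \<in> constr H k S) \<longleftrightarrow> e \<in> H"
proof
  assume "sh k ` e \<in> constr H k S"
  then consider "sh k ` e \<in> image (sh k) ` H" | "sh k ` e \<in> (\<lambda>w. {k, w}) ` (TT H k \<union> S)"
    unfolding constr_def by blast
  then show "e \<in> H"
  proof cases
    case 1
    then obtain e' where "e' \<in> H" "sh k ` e = sh k ` e'" by auto
    then show ?thesis using inj_sh by (metis inj_image_eq_iff)
  next
    case 2
    then have "k \<in> sh k ` e" by auto
    then show ?thesis using k_notin_sh_image by blast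
  qed
qed (auto simp: constr_def)

lemma sh_pair_in_constr: "({sh k a, sh k b} \<in> constr H k S) \<longleftrightarrow> {a, b} \<in> H"
  using sh_image_in_constr[of k "{a,b}" H S] by simp

lemma TT_less: "w \<in> TT H k \<Longrightarrow> w < k" by (simp add: TT_def)

lemma nb_constr_k:
  assumes "S \<subseteq> {k<..n}"
  shows "nb (constr H k S) k = TT H k \<union> S"
proof -
  have "{k, x} \<in> constr H k S \<longleftrightarrow> x \<in> TT H k \<union> S" for x
  proof
    assume "{k, x} \<in> constr H k S"
    then consider "{k, x} \<in> image (sh k) ` H" | "{k, x} \<in> (\<lambda>w. {k, w}) ` (TT H k \<union> S)"
      unfolding constr_def by blast
    then show "x \<in> TT H k \<union> S"
    proof cases
      case 1
      then obtain e where "{k, x} = sh k ` e" by auto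
      then have "k \<in> sh k ` e" by (metis insertI1)
      then show ?thesis using k_notin_sh_image by blast
    next
      case 2
      then obtain y where "y \<in> TT H k \<union> S" "{k, x} = {k, y}" by auto
      then show ?thesis by (metis doubleton_eq_iff)
    qed
  qed (auto simp: constr_def)
  then show ?thesis by (auto simp: nb_def)
qed

lemma nb_constr_less:
  assumes "S \<subseteq> {k<..n}" "w < k"
  shows "nb (constr H k S) w = sh k ` nb H w \<union> (if w \<in> TT H k then {k} else {})"
proof -
  have shw: "sh k w = w" using assms by (simp add: sh_def)
  have "{w, x} \<in> constr H k S \<longleftrightarrow> x \<in> sh k ` nb H w \<or> (w \<in> TT H k \<and> x = k)" for x
  proof
    assume "{w, x} \<in> constr H k S"
    then consider "{w, x} \<in> image (sh k) ` H" | "{w, x} \<in> (\<lambda>y. {k, y}) ` (TT H k \<union> S)"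
      unfolding constr_def by blast
    then show "x \<in> sh k ` nb H w \<or> (w \<in> TT H k \<and> x = k)"
    proof cases
      case 1
      then obtain e where e: "e \<in> H" "{w, x} = sh k ` e" by auto
      then have "w \<in> sh k ` e" by (metis insertI1)
      then obtain a where a: "a \<in> e" "sh k a = w" by auto
      then have "a = w" using shw inj_sh by (metis injD)
      have "x \<in> sh k ` e" using e by (metis insertI1 insert_commute)
      then obtain b where b: "b \<in> e" "sh k b = x" by auto
      have "e = {w, b}"
      proof -
        have "sh k ` e = sh k ` {w, b}" using e a b \<open>a = w\<close> by auto
        then show ?thesis using inj_sh by (metis inj_image_eq_iff)
      qed
      then have "b \<in> nb H w" using e by (simp add: nb_def)
      then show ?thesis using b by auto
    next
      case 2
      then obtain y where y: "y \<in> TT H k \<union> S" "{w, x} = {k, y}" by auto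
      have "w \<noteq> k" using assms by simp
      then have "w = y" "x = k" using y(2) by (auto simp: doubleton_eq_iff)
      moreover have "w \<notin> S" using assms by auto
      ultimately show ?thesis using y(1) by auto
    qed
  next
    assume "x \<in> sh k ` nb H w \<or> (w \<in> TT H k \<and> x = k)"
    then show "{w, x} \<in> constr H k S"
    proof
      assume "x \<in> sh k ` nb H w"
      then obtain b where "{w, b} \<in> H" "x = sh k b" by (auto simp: nb_def)
      then show ?thesis using sh_pair_in_constr[of k w b H S] shw by simp
    next
      assume "w \<in> TT H k \<and> x = k"
      then show ?thesis by (auto simp: constr_def insert_commute)
    qed
  qed
  then show ?thesis by (auto simp: nb_def)
qed

lemma nb_sub: "H \<subseteq> all_edges n \<Longrightarrow> nb H w \<subseteq> {0..<n}"
proof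
  fix x assume H: "H \<subseteq> all_edges n" and "x \<in> nb H w"
  then have "{w, x} \<in> all_edges n" by (auto simp: nb_def)
  then obtain a b where ab: "a < n" "b < n" "{w, x} = {a, b}" unfolding all_edges_def by blast
  then have "x \<in> {a, b}" by (metis insertI1 insert_commute)
  then show "x \<in> {0..<n}" using ab by auto
qed

lemma finite_nb: "H \<subseteq> all_edges n \<Longrightarrow> finite (nb H w)"
  by (rule finite_subset[OF nb_sub]) auto

lemma deg_less_odd:
  assumes "H \<subseteq> all_edges n" "S \<subseteq> {k<..n}" "w < k"
  shows "odd (card (nb (constr H k S) w))"
proof -
  have fin: "finite (sh k ` nb H w)" using finite_nb[OF assms(1)] by simp
  have kn: "k \<notin> sh k ` nb H w" by (rule k_notin_sh_image)
  have c: "card (sh k ` nb H w) = card (nb H w)"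
    using inj_sh by (metis card_image inj_on_subset subset_UNIV)
  show ?thesis
  proof (cases "w \<in> TT H k")
    case True
    then have "even (card (nb H w))" by (simp add: TT_def)
    then show ?thesis using nb_constr_less[OF assms(2,3)] True fin kn c by simp
  next
    case False
    then have "odd (card (nb H w))" using assms(3) by (simp add: TT_def)
    then show ?thesis using nb_constr_less[OF assms(2,3)] False c by simp
  qed
qed

lemma deg_k_card:
  assumes "S \<subseteq> {k<..n}"
  shows "card (nb (constr H k S) k) = card (TT H k) + card S"
proof -
  have f1: "finite (TT H k)" by (rule finite_subset[of _ "{..<k}"]) (auto simp: TT_def)
  have f2: "finite S" by (rule finite_subset[OF assms]) auto
  have d: "TT H k \<inter> S = {}" using assms by (auto simp: TT_def)
  show ?thesis using nb_constr_k[OF assms] card_Un_disjoint[OF f1 f2 d] by simp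
qed

lemma sh_image_range: "k < n \<Longrightarrow> sh k ` {0..<n} = {0..<Suc n} - {k}"
proof (intro equalityI subsetI)
  fix x assume "k < n" "x \<in> {0..<Suc n} - {k}"
  then have "x = sh k (if x < k then x else x - 1)" "(if x < k then x else x - 1) \<in> {0..<n}"
    by (auto simp: sh_def)
  then show "x \<in> sh k ` {0..<n}" by blast
next
  fix x assume "x \<in> sh k ` {0..<n}"
  then obtain y where "y < n" "x = sh k y" by auto
  then show "x \<in> {0..<Suc n} - {k}" using sh_neq[of k y] by (simp add: sh_def)
qed

lemma card_nth_distinct:
  assumes "distinct xs"
  shows "card {j. j < length xs \<and> P (xs ! j)} = card {x \<in> set xs. P x}"
proof -
  have "{x \<in> set xs. P x} = (nth xs) ` {j. j < length xs \<and> P (xs ! j)}"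
    by (auto simp: in_set_conv_nth)
  moreover have "inj_on (nth xs) {j. j < length xs \<and> P (xs ! j)}"
    using assms by (intro inj_on_nth) auto
  ultimately show ?thesis by (simp add: card_image)
qed

lemma shift_set: "{j. i < j \<and> j < Suc n \<and> P j} = Suc ` {j. i \<le> j \<and> j < n \<and> P (Suc j)}"
proof (intro equalityI subsetI)
  fix x assume "x \<in> {j. i < j \<and> j < Suc n \<and> P j}"
  then have x: "i < x" "x < Suc n" "P x" by auto
  then have "x = Suc (x - 1)" by simp
  moreover have "x - 1 \<in> {j. i \<le> j \<and> j < n \<and> P (Suc j)}" using x by (cases x) auto
  ultimately show "x \<in> Suc ` {j. i \<le> j \<and> j < n \<and> P (Suc j)}" by (rule image_eqI)
next
  fix x assume "x \<in> Suc ` {j. i \<le> j \<and> j < n \<and> P (Suc j)}"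
  then show "x \<in> {j. i < j \<and> j < Suc n \<and> P j}" by auto
qed

lemma card_shift_set: "card {j. i < j \<and> j < Suc n \<and> P j} = card {j. i \<le> j \<and> j < n \<and> P (Suc j)}"
  unfolding shift_set by (simp add: card_image)

lemma seteq_test:
  assumes "S \<subseteq> {k<..n}" "set ws = {0..<Suc n} - {k}" "k < n"
  shows "{x \<in> set ws. x \<in> nb (constr H k S) k} = nb (constr H k S) k"
proof -
  have a: "TT H k \<subseteq> {0..<Suc n} - {k}" using assms(3) by (auto dest: TT_less)
  have b: "S \<subseteq> {0..<Suc n} - {k}" using assms(1) by auto
  have "nb (constr H k S) k \<subseteq> {0..<Suc n} - {k}"
    unfolding nb_constr_k[OF assms(1)] using a b by (rule Un_least)
  then show ?thesis unfolding assms(2) by blast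
qed

lemma case0_test:
  assumes "length ws = n"
  shows "card {j. 0 < j \<and> j < Suc n \<and> {(k # ws) ! 0, (k # ws) ! j} \<in> E}
        = card {j. j < length ws \<and> ws ! j \<in> nb E k}"
proof -
  have "card {j. 0 < j \<and> j < Suc n \<and> {(k # ws) ! 0, (k # ws) ! j} \<in> E}
      = card {j. 0 \<le> j \<and> j < n \<and> {(k # ws) ! 0, (k # ws) ! Suc j} \<in> E}"
    by (rule card_shift_set)
  also have "\<dots> = card {j. j < length ws \<and> ws ! j \<in> nb E k}"
    by (simp add: assms nb_def)
  finally show ?thesis .
qed

lemma constr_ED:
  assumes H: "H \<subseteq> all_edges n" and ed: "even_degenerate n H" and kn: "k < n"
    and S: "S \<subseteq> {k<..n}" and par: "even (card (TT H k) + card S)"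
  shows "even_degenerate (Suc n) (constr H k S)"
proof -
  let ?E = "constr H k S"
  obtain vs where vs: "distinct vs" "set vs = {0..<n}"
    "\<And>i. i + 2 < n \<Longrightarrow> even (card {j. i < j \<and> j < n \<and> {vs ! i, vs ! j} \<in> H})"
    using ed unfolding even_degenerate_def by blast
  have len: "length vs = n" using distinct_card[OF vs(1)] vs(2) by simp
  define ws where "ws = map (sh k) vs"
  have dws: "distinct ws" unfolding ws_def using vs(1) inj_sh
    by (simp add: distinct_map inj_on_subset[OF inj_sh])
  have sws: "set ws = {0..<Suc n} - {k}" unfolding ws_def using vs(2) sh_image_range[OF kn] by simp
  have lws: "length ws = n" by (simp add: ws_def len)
  have d': "distinct (k # ws)" using dws sws by simp
  have s': "set (k # ws) = {0..<Suc n}" using sws kn by (simp add: insert_absorb)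
  have cond: "even (card {j. i < j \<and> j < Suc n \<and> {(k # ws) ! i, (k # ws) ! j} \<in> ?E})"
    if "i + 2 < Suc n" for i
  proof (cases i)
    case 0
    have "card {j. i < j \<and> j < Suc n \<and> {(k # ws) ! i, (k # ws) ! j} \<in> ?E}
        = card {j. j < length ws \<and> ws ! j \<in> nb ?E k}"
      unfolding 0 by (rule case0_test[OF lws])
    also have "\<dots> = card {x \<in> set ws. x \<in> nb ?E k}"
      by (rule card_nth_distinct[OF dws])
    also have "\<dots> = card (nb ?E k)"
    proof -
      show ?thesis using seteq_test[OF S sws kn, of H] by simp
    qed
    finally have eq: "card {j. i < j \<and> j < Suc n \<and> {(k # ws) ! i, (k # ws) ! j} \<in> ?E} = card (nb ?E k)" .
    show ?thesis unfolding eq deg_k_card[OF S] using par .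
  next
    case (Suc i')
    have i': "i' + 2 < n" using that Suc by simp
    have "card {j. i < j \<and> j < Suc n \<and> {(k # ws) ! i, (k # ws) ! j} \<in> ?E}
        = card {j. i' < j \<and> j < n \<and> {ws ! i', ws ! j} \<in> ?E}"
      using Suc by (simp add: card_shift_set Suc_le_eq)
    also have "\<dots> = card {j. i' < j \<and> j < n \<and> {vs ! i', vs ! j} \<in> H}"
    proof -
      have "{j. i' < j \<and> j < n \<and> {ws ! i', ws ! j} \<in> ?E} = {j. i' < j \<and> j < n \<and> {vs ! i', vs ! j} \<in> H}"
      proof (rule Collect_cong)
        fix j
        have wsn: "\<And>j. j < n \<Longrightarrow> ws ! j = sh k (vs ! j)" by (simp add: ws_def len)
        show "(i' < j \<and> j < n \<and> {ws ! i', ws ! j} \<in> ?E) = (i' < j \<and> j < n \<and> {vs ! i', vs ! j} \<in> H)"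
        proof (cases "i' < j \<and> j < n")
          case True
          then show ?thesis using wsn[of j] wsn[of i'] i' sh_pair_in_constr[of k "vs ! i'" "vs ! j" H S] by simp
        qed blast
      qed
      then show ?thesis by simp
    qed
    finally have eq2: "card {j. i < j \<and> j < Suc n \<and> {(k # ws) ! i, (k # ws) ! j} \<in> ?E} = card {j. i' < j \<and> j < n \<and> {vs ! i', vs ! j} \<in> H}" .
    show ?thesis unfolding eq2 by (rule vs(3)[OF i'])
  qed
  show ?thesis unfolding even_degenerate_def
  proof (rule exI[of _ "k # ws"], intro conjI allI impI)
    show "distinct (k # ws)" by (rule d')
    show "set (k # ws) = {0..<Suc n}" by (rule s')
    fix i assume "i + 2 < Suc n"
    then show "even (card {j. i < j \<and> j < Suc n \<and> {(k # ws) ! i, (k # ws) ! j} \<in> ?E})"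
      by (rule cond)
  qed
qed

lemma constr_sub:
  assumes H: "H \<subseteq> all_edges n" and kn: "k < n" and S: "S \<subseteq> {k<..n}"
  shows "constr H k S \<subseteq> all_edges (Suc n)"
proof
  fix e assume "e \<in> constr H k S"
  then consider "e \<in> image (sh k) ` H" | "e \<in> (\<lambda>w. {k, w}) ` (TT H k \<union> S)"
    unfolding constr_def by blast
  then show "e \<in> all_edges (Suc n)"
  proof cases
    case 1
    then obtain e0 where e0: "e0 \<in> H" "e = sh k ` e0" by blast
    then have "e0 \<in> all_edges n" using H by blast
    then obtain x y where xy: "x < n" "y < n" "x \<noteq> y" "e0 = {x, y}" unfolding all_edges_def by blast
    have "e = {sh k x, sh k y}" using e0(2) xy(4) by simp
    moreover have "sh k x < Suc n" "sh k y < Suc n" using xy by (auto simp: sh_def)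
    moreover have "sh k x \<noteq> sh k y" using xy(3) inj_sh by (metis injD)
    ultimately show ?thesis unfolding all_edges_def by blast
  next
    case 2
    then obtain w where w: "w \<in> TT H k \<union> S" "e = {k, w}" by blast
    have "w \<noteq> k \<and> w < Suc n"
    proof (cases "w \<in> TT H k")
      case True then show ?thesis using TT_less[OF True] kn by simp
    next
      case False then have "w \<in> S" using w by blast
      then show ?thesis using S by auto
    qed
    moreover have "k < Suc n" using kn by simp
    ultimately show ?thesis using w(2) unfolding all_edges_def by blast
  qed
qed

lemma constr_k_eq:
  assumes H1: "H1 \<subseteq> all_edges n" and H2: "H2 \<subseteq> all_edges n"
    and S1: "S1 \<subseteq> {k1<..n}" and S2: "S2 \<subseteq> {k2<..n}"
    and p1: "even (card (TT H1 k1) + card S1)"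
    and eq: "constr H1 k1 S1 = constr H2 k2 S2"
  shows "\<not> k1 < k2"
proof
  assume lt: "k1 < k2"
  have "odd (card (nb (constr H2 k2 S2) k1))" by (rule deg_less_odd[OF H2 S2 lt])
  moreover have "even (card (nb (constr H1 k1 S1) k1))" using deg_k_card[OF S1] p1 by simp
  ultimately show False using eq by simp
qed

lemma constr_inj:
  assumes H1: "H1 \<subseteq> all_edges n" and H2: "H2 \<subseteq> all_edges n"
    and S1: "S1 \<subseteq> {k1<..n}" and S2: "S2 \<subseteq> {k2<..n}"
    and p1: "even (card (TT H1 k1) + card S1)" and p2: "even (card (TT H2 k2) + card S2)"
    and eq: "constr H1 k1 S1 = constr H2 k2 S2"
  shows "H1 = H2 \<and> k1 = k2 \<and> S1 = S2"
proof -
  have "\<not> k1 < k2" by (rule constr_k_eq[OF H1 H2 S1 S2 p1 eq])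
  moreover have "\<not> k2 < k1" by (rule constr_k_eq[OF H2 H1 S2 S1 p2 eq[symmetric]])
  ultimately have k: "k1 = k2" by simp
  have "e \<in> H1 \<longleftrightarrow> e \<in> H2" for e
    using sh_image_in_constr[of k1 e H1 S1] sh_image_in_constr[of k2 e H2 S2] eq k by simp
  then have h: "H1 = H2" by blast
  have recS: "S = {w \<in> nb (constr H k S) k. k < w}" if "S \<subseteq> {k<..n}" for H k S
    unfolding nb_constr_k[OF that] using that by (auto dest: TT_less)
  have "S1 = S2" using recS[OF S1, of H1] recS[OF S2, of H2] eq k by simp
  then show ?thesis using h k by simp
qed

definition Good :: "nat \<Rightarrow> nat set set set" where
  "Good m = {E \<in> Pow (all_edges m). even_degenerate m E}"

definition Sset :: "nat \<Rightarrow> nat set set \<Rightarrow> nat \<Rightarrow> nat set set" where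
  "Sset n H k = {S. S \<subseteq> {k<..n} \<and> even (card (TT H k) + card S)}"

lemma finite_Good: "finite (Good m)"
  unfolding Good_def using finite_all_edges by simp

lemma card_Sset: "k < n \<Longrightarrow> card (Sset n H k) = 2 ^ (n - k - 1)"
  unfolding Sset_def using card_parity_subsets[of "{k<..n}" "card (TT H k)"] by simp

lemma Good_bound: "card (Good n) * (2 ^ n - 1) \<le> card (Good (Suc n))"
proof -
  define I where "I = Sigma (Good n) (\<lambda>H. Sigma {..<n} (Sset n H))"
  define f where "f = (\<lambda>(H, k, S). constr H k S)"
  have inj: "inj_on f I"
  proof (rule inj_onI)
    fix x y assume x: "x \<in> I" and y: "y \<in> I" and fxy: "f x = f y"
    obtain H1 k1 S1 where x': "x = (H1, k1, S1)" by (cases x) auto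
    obtain H2 k2 S2 where y': "y = (H2, k2, S2)" by (cases y) auto
    have a: "H1 \<subseteq> all_edges n" "S1 \<subseteq> {k1<..n}" "even (card (TT H1 k1) + card S1)"
      using x x' by (auto simp: I_def Good_def Sset_def)
    have b: "H2 \<subseteq> all_edges n" "S2 \<subseteq> {k2<..n}" "even (card (TT H2 k2) + card S2)"
      using y y' by (auto simp: I_def Good_def Sset_def)
    have "constr H1 k1 S1 = constr H2 k2 S2" using fxy x' y' by (simp add: f_def)
    then show "x = y" using constr_inj[OF a(1) b(1) a(2) b(2) a(3) b(3)] x' y' by simp
  qed
  have img: "f ` I \<subseteq> Good (Suc n)"
  proof
    fix E assume "E \<in> f ` I"
    then obtain H k S where hks: "(H, k, S) \<in> I" "E = constr H k S" by (auto simp: f_def)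
    then have a: "H \<subseteq> all_edges n" "even_degenerate n H" "k < n" "S \<subseteq> {k<..n}"
      "even (card (TT H k) + card S)"
      by (auto simp: I_def Good_def Sset_def)
    show "E \<in> Good (Suc n)" unfolding Good_def hks(2)
      using constr_sub[OF a(1) a(3) a(4)] constr_ED[OF a(1) a(2) a(3) a(4) a(5)] by simp
  qed
  have "card I \<le> card (Good (Suc n))"
    by (rule card_inj_on_le[OF inj img finite_Good])
  moreover have "card I = card (Good n) * (2 ^ n - 1)"
  proof -
    have fS: "finite (Sset n H k)" for H k
      unfolding Sset_def by (rule finite_subset[of _ "Pow {k<..n}"]) auto
    have "card I = (\<Sum>H\<in>Good n. card (Sigma {..<n} (Sset n H)))"
      unfolding I_def by (rule card_SigmaI) (use finite_Good fS in auto)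
    also have "\<dots> = (\<Sum>H\<in>Good n. (\<Sum>k<n. card (Sset n H k)))"
      by (intro sum.cong refl card_SigmaI) (use fS in auto)
    also have "\<dots> = (\<Sum>H\<in>Good n. (\<Sum>k<n. (2::nat) ^ (n - k - 1)))"
      by (intro sum.cong refl) (simp add: card_Sset)
    also have "\<dots> = card (Good n) * (2 ^ n - 1)"
      using sum_pow2[of n] by simp
    finally show ?thesis .
  qed
  ultimately show ?thesis by simp
qed

lemma c_eq: "c m = 1 - real (card (Good m)) / 2 ^ card (all_edges m)"
proof -
  let ?P = "Pow (all_edges m)"
  have fP: "finite ?P" using finite_all_edges by simp
  have ne: "?P \<noteq> {}" by blast
  have "c m = card (?P \<inter> {E. \<not> even_degenerate m E}) / card ?P"
    unfolding c_def Gnp_half_def using measure_pmf_of_set[OF ne fP] by simp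
  moreover have "card ?P = card (Good m) + card (?P \<inter> {E. \<not> even_degenerate m E})"
  proof -
    have "?P = Good m \<union> (?P \<inter> {E. \<not> even_degenerate m E})" unfolding Good_def by blast
    moreover have "Good m \<inter> (?P \<inter> {E. \<not> even_degenerate m E}) = {}" unfolding Good_def by blast
    ultimately show ?thesis using fP finite_Good
      by (metis card_Un_disjoint finite_Int)
  qed
  moreover have "card ?P = 2 ^ card (all_edges m)" using finite_all_edges card_Pow by blast
  ultimately have cm: "c m = real (card (?P \<inter> {E. \<not> even_degenerate m E})) /
      (real (card (Good m)) + real (card (?P \<inter> {E. \<not> even_degenerate m E})))"
    and T: "(2::real) ^ card (all_edges m) = real (card (Good m)) + real (card (?P \<inter> {E. \<not> even_degenerate m E}))"
    by (simp_all, metis of_nat_add of_nat_numeral of_nat_power)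
  have pos: "real (card (Good m)) + real (card (?P \<inter> {E. \<not> even_degenerate m E})) > 0"
    using T[symmetric] by simp
  show ?thesis unfolding cm T using pos by (simp add: field_simps)
qed

theorem mainTheorem15:
  fixes n :: nat
  assumes "n \<ge> 1"
  shows "c (n + 1) \<le> (1 - 2 powi (- int n)) * c n + 2 powi (- int n)"
proof -
  define g where "g = real (card (Good n))"
  define g' where "g' = real (card (Good (Suc n)))"
  define N where "N = card (all_edges n)"
  define q :: real where "q = 2 ^ n"
  have q1: "q \<ge> 1" unfolding q_def by simp
  have pw: "2 powi (- int n) = 1 / q" unfolding q_def by (simp add: power_int_minus_divide)
  have gb: "g * (q - 1) \<le> g'"
  proof -
    have "real (card (Good n) * (2 ^ n - 1)) \<le> g'" unfolding g'_def using Good_bound[of n] by linarith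
    moreover have "real (card (Good n) * (2 ^ n - 1)) = g * (q - 1)"
      unfolding g_def q_def by (simp add: of_nat_diff)
    ultimately show ?thesis by simp
  qed
  have cn: "c n = 1 - g / 2 ^ N" unfolding g_def N_def by (rule c_eq)
  have cn1: "c (n + 1) = 1 - g' / (2 ^ N * q)"
    using c_eq[of "Suc n"] unfolding g'_def N_def q_def by (simp add: card_all_edges_Suc power_add)
  have pN: "(2::real) ^ N > 0" by simp
  have "(1 - 1 / q) * (1 - g / 2 ^ N) + 1 / q = 1 - g * (q - 1) / (2 ^ N * q)"
    using q1 pN by (simp add: field_simps)
  moreover have "g * (q - 1) / (2 ^ N * q) \<le> g' / (2 ^ N * q)"
    using gb q1 pN by (intro divide_right_mono) auto
  ultimately show ?thesis unfolding pw cn cn1 by simp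
qed

end
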